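(* Let $R$ be a QNA with Goodearl–Yakimov elements $y_1,\ldots,y_N$. For all $i,j\in[1,N]$ with $i\neq j$, we have $y_i\notin y_jR$.
   Context: ${\mathbb K}$ is a field of characteristic $0$. A quantum nilpotent algebra (QNA) is an iterated Ore extension $R={\mathbb K}[x_1][x_2;\sigma_2,\delta_2]\cdots[x_N;\sigma_N,\delta_N]$, where $R_k={\mathbb K}[x_1][x_2;\sigma_2,\delta_2]\cdots[x_k;\sigma_k,\delta_k]$ ($R_0={\mathbb K}$), $\sigma_k$ is a ${\mathbb K}$-automorphism and $\delta_k$ a $\sigma_k$-derivation of $R_{k-1}$, together with a torus $\mathcal H$ acting rationally by ${\mathbb K}$-automorphisms on $R$ with each $x_i$ an $\mathcal H$-eigenvector, such that: (i) $\sigma_k(x_j)=\lambda_{kj}x_j$ for $j<k$, with $\lambda_{kj}\in{\mathbb K}^*$; (ii) $\delta_k$ is locally nilpotent on $R_{k-1}$; (iii) for each $k$ there exist $h_k\in\mathcal H$ and $q_k\in{\mathbb K}^*$ not a root of unity such that $h_k$ acts on $R_{k-1}$ as $\sigma_k$ and $h_k\cdot x_k=q_kx_k$. The rank is $n=|\{k:\delta_k=0\}|$ and $\mathcal H=({\mathbb K}^* )^n$ is taken maximal. Homogeneous elements are the $\mathcal H$-eigenvectors. An element $u$ is normal if $uR=Ru$; a prime element is a nonzero normal $p$ with $pR$ a completely prime ideal. Goodearl–Yakimov elements: there is a surjective map $\mu:[1,N]\to[1,n]$ with predecessor $p(k)=\max\{j<k:\mu(j)=\mu(k)\}$ (or $-\infty$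 if none) and successor $s(k)=\min\{j>k:\mu(j)=\mu(k)\}$ (or $+\infty$ if none), and homogeneous elements $y_1,\ldots,y_N\in R$, uniquely determined, with $y_k=x_k$ if $p(k)=-\infty$ and $y_k=y_{p(k)}x_k-c_k$ for some $c_k\in R_{k-1}$ otherwise, such that for every $k$ the set $\{y_j: j\le k,\ s(j)>k\}$ is, up to nonzero scalars, the set of homogeneous prime elements of $R_k$. The $y_i$ pairwise quasi-commute. *)

theory Defs
  imports Main
begin

text \<open>
  The K-algebra R is
  a type 'r of class ring_1 (not necessarily commutative) together with a ring
  homomorphism sc : K \<Rightarrow> R whose image is central (the structure map).
  The generators are x 1, ..., x N.  R_k is the K-subalgebra generated by
  x 1, ..., x k (so R_0 is the image of K).
\<close>

definition K_algebra :: "('k::field_char_0 \<Rightarrow> 'r::ring_1) \<Rightarrow> bool" where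
  "K_algebra sc \<longleftrightarrow>
     (\<forall>a b. sc (a + b) = sc a + sc b) \<and> (\<forall>a b. sc (a * b) = sc a * sc b) \<and> sc 1 = 1 \<and>
     (\<forall>a r. sc a * r = r * sc a)"

inductive_set subalg :: "('k \<Rightarrow> 'r::ring_1) \<Rightarrow> (nat \<Rightarrow> 'r) \<Rightarrow> nat \<Rightarrow> 'r set"
  for sc :: "'k \<Rightarrow> 'r" and x :: "nat \<Rightarrow> 'r" and k :: nat where
  scal: "sc c \<in> subalg sc x k"
| gen: "1 \<le> i \<Longrightarrow> i \<le> k \<Longrightarrow> x i \<in> subalg sc x k"
| add: "a \<in> subalg sc x k \<Longrightarrow> b \<in> subalg sc x k \<Longrightarrow> a + b \<in> subalg sc x k"
| mult: "a \<in> subalg sc x k \<Longrightarrow> b \<in> subalg sc x k \<Longrightarrow> a * b \<in> subalg sc x k"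
| uminus: "a \<in> subalg sc x k \<Longrightarrow> - a \<in> subalg sc x k"

definition K_automorphism_on :: "('k \<Rightarrow> 'r::ring_1) \<Rightarrow> 'r set \<Rightarrow> ('r \<Rightarrow> 'r) \<Rightarrow> bool" where
  "K_automorphism_on sc S \<sigma> \<longleftrightarrow>
     bij_betw \<sigma> S S \<and>
     (\<forall>a\<in>S. \<forall>b\<in>S. \<sigma> (a + b) = \<sigma> a + \<sigma> b \<and> \<sigma> (a * b) = \<sigma> a * \<sigma> b) \<and>
     (\<forall>c. \<sigma> (sc c) = sc c)"

definition sigma_derivation_on :: "('k \<Rightarrow> 'r::ring_1) \<Rightarrow> 'r set \<Rightarrow> ('r \<Rightarrow> 'r) \<Rightarrow> ('r \<Rightarrow> 'r) \<Rightarrow> bool" where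
  "sigma_derivation_on sc S \<sigma> \<delta> \<longleftrightarrow>
     (\<forall>a\<in>S. \<delta> a \<in> S) \<and>
     (\<forall>a\<in>S. \<forall>b\<in>S. \<delta> (a + b) = \<delta> a + \<delta> b \<and> \<delta> (a * b) = \<sigma> a * \<delta> b + \<delta> a * b) \<and>
     (\<forall>c. \<forall>a\<in>S. \<delta> (sc c * a) = sc c * \<delta> a)"

text \<open>R is the iterated Ore extension K[x_1][x_2;sigma_2,delta_2]...[x_N;sigma_N,delta_N]:
  for every k, R_k is generated by R_(k-1) and x_k, x_k r = sigma_k(r) x_k + delta_k(r) for
  r in R_(k-1), and R_k is a free left R_(k-1)-module with basis 1, x_k, x_k^2, ...;
  finally R_N is all of R.  (For k = 1 we take sigma_1 = id, delta_1 = 0, i.e. R_1 = K[x_1].)\<close>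
definition iterated_Ore :: "('k::field_char_0 \<Rightarrow> 'r::ring_1) \<Rightarrow> (nat \<Rightarrow> 'r) \<Rightarrow> nat
      \<Rightarrow> (nat \<Rightarrow> 'r \<Rightarrow> 'r) \<Rightarrow> (nat \<Rightarrow> 'r \<Rightarrow> 'r) \<Rightarrow> bool" where
  "iterated_Ore sc x N \<sigma> \<delta> \<longleftrightarrow>
     K_algebra sc \<and> subalg sc x N = UNIV \<and>
     (\<forall>r\<in>subalg sc x 0. \<sigma> 1 r = r \<and> \<delta> 1 r = 0) \<and>
     (\<forall>k\<in>{1..N}.
        K_automorphism_on sc (subalg sc x (k - 1)) (\<sigma> k) \<and>
        sigma_derivation_on sc (subalg sc x (k - 1)) (\<sigma> k) (\<delta> k) \<and>
        (\<forall>r\<in>subalg sc x (k - 1). x k * r = \<sigma> k r * x k + \<delta> k r) \<and>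
        (\<forall>r\<in>subalg sc x k. \<exists>m a. (\<forall>i<m. a i \<in> subalg sc x (k - 1)) \<and>
                                    r = (\<Sum>i<m. a i * x k ^ i)) \<and>
        (\<forall>m a. (\<forall>i<m. a i \<in> subalg sc x (k - 1)) \<and> (\<Sum>i<m. a i * x k ^ i) = 0
                 \<longrightarrow> (\<forall>i<m. a i = 0)))"

text \<open>The torus H = (K^*)^n, represented by functions h with h l \<noteq> 0 for l in {1..n}
  and h l = 1 otherwise.\<close>
definition torus :: "nat \<Rightarrow> (nat \<Rightarrow> 'k::field) set" where
  "torus n = {h. (\<forall>l\<in>{1..n}. h l \<noteq> 0) \<and> (\<forall>l. l \<notin> {1..n} \<longrightarrow> h l = 1)}"

definition ore_rank :: "('k \<Rightarrow> 'r::ring_1) \<Rightarrow> (nat \<Rightarrow> 'r) \<Rightarrow> nat \<Rightarrow> (nat \<Rightarrow> 'r \<Rightarrow> 'r) \<Rightarrow> nat" where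
  "ore_rank sc x N \<delta> = card {k\<in>{1..N}. \<forall>r\<in>subalg sc x (k - 1). \<delta> k r = 0}"

text \<open>Since the x_i generate R and are eigenvectors, rationality of the
  action amounts to each eigen-character being a rational character of the torus, i.e.
  a Laurent monomial h \<mapsto> prod_l h_l^(w i l).\<close>
definition rational_torus_action ::
  "('k::field \<Rightarrow> 'r::ring_1) \<Rightarrow> (nat \<Rightarrow> 'r) \<Rightarrow> nat \<Rightarrow> nat \<Rightarrow> ((nat \<Rightarrow> 'k) \<Rightarrow> 'r \<Rightarrow> 'r) \<Rightarrow> bool" where
  "rational_torus_action sc x N n act \<longleftrightarrow>
     act (\<lambda>_. 1) = id \<and>
     (\<forall>h\<in>torus n. \<forall>h'\<in>torus n. act (\<lambda>l. h l * h' l) = act h \<circ> act h') \<and>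
     (\<forall>h\<in>torus n. K_automorphism_on sc UNIV (act h)) \<and>
     (\<exists>w :: nat \<Rightarrow> nat \<Rightarrow> int. \<forall>i\<in>{1..N}. \<forall>h\<in>torus n.
         act h (x i) = sc (\<Prod>l\<in>{1..n}. h l powi w i l) * x i)"

definition QNA :: "('k::field_char_0 \<Rightarrow> 'r::ring_1) \<Rightarrow> (nat \<Rightarrow> 'r) \<Rightarrow> nat
      \<Rightarrow> (nat \<Rightarrow> 'r \<Rightarrow> 'r) \<Rightarrow> (nat \<Rightarrow> 'r \<Rightarrow> 'r) \<Rightarrow> nat \<Rightarrow> ((nat \<Rightarrow> 'k) \<Rightarrow> 'r \<Rightarrow> 'r) \<Rightarrow> bool" where
  "QNA sc x N \<sigma> \<delta> n act \<longleftrightarrow>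
     iterated_Ore sc x N \<sigma> \<delta> \<and>
     n = ore_rank sc x N \<delta> \<and>
     rational_torus_action sc x N n act \<and>
     (\<forall>k\<in>{1..N}. \<forall>j\<in>{1..N}. j < k \<longrightarrow> (\<exists>lam. lam \<noteq> 0 \<and> \<sigma> k (x j) = sc lam * x j)) \<and>
     (\<forall>k\<in>{1..N}. \<forall>r\<in>subalg sc x (k - 1). \<exists>m. (\<delta> k ^^ m) r = 0) \<and>
     (\<forall>k\<in>{1..N}. \<exists>h\<in>torus n. \<exists>q. q \<noteq> 0 \<and> (\<forall>m>0. q ^ m \<noteq> 1) \<and>
         (\<forall>r\<in>subalg sc x (k - 1). act h r = \<sigma> k r) \<and> act h (x k) = sc q * x k)"

definition homogeneous :: "('k::field \<Rightarrow> 'r::ring_1) \<Rightarrow> nat \<Rightarrow> ((nat \<Rightarrow> 'k) \<Rightarrow> 'r \<Rightarrow> 'r) \<Rightarrow> 'r \<Rightarrow> bool" where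
  "homogeneous sc n act u \<longleftrightarrow> u \<noteq> 0 \<and> (\<forall>h\<in>torus n. \<exists>c. act h u = sc c * u)"

definition normal_in :: "'r::ring_1 set \<Rightarrow> 'r \<Rightarrow> bool" where
  "normal_in S u \<longleftrightarrow> u \<in> S \<and> {u * r | r. r \<in> S} = {r * u | r. r \<in> S}"

definition completely_prime_in :: "'r::ring_1 set \<Rightarrow> 'r set \<Rightarrow> bool" where
  "completely_prime_in S P \<longleftrightarrow> P \<subseteq> S \<and> P \<noteq> S \<and>
     (\<forall>a\<in>S. \<forall>b\<in>S. a * b \<in> P \<longrightarrow> a \<in> P \<or> b \<in> P)"

definition prime_elem_in :: "'r::ring_1 set \<Rightarrow> 'r \<Rightarrow> bool" where
  "prime_elem_in S p \<longleftrightarrow> p \<noteq> 0 \<and> normal_in S p \<and> completely_prime_in S {p * r | r. r \<in> S}"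

text \<open>Predecessor p(k) exists (p(k) \<noteq> -\<infinity>) and its value.\<close>
definition has_pred :: "(nat \<Rightarrow> nat) \<Rightarrow> nat \<Rightarrow> bool" where
  "has_pred \<mu> k \<longleftrightarrow> (\<exists>j. 1 \<le> j \<and> j < k \<and> \<mu> j = \<mu> k)"

definition pred_idx :: "(nat \<Rightarrow> nat) \<Rightarrow> nat \<Rightarrow> nat" where
  "pred_idx \<mu> k = Max {j. 1 \<le> j \<and> j < k \<and> \<mu> j = \<mu> k}"

text \<open>s(j) > k, i.e. there is no i with j < i \<le> k and \<mu> i = \<mu> j.\<close>
definition succ_gt :: "(nat \<Rightarrow> nat) \<Rightarrow> nat \<Rightarrow> nat \<Rightarrow> bool" where
  "succ_gt \<mu> j k \<longleftrightarrow> (\<forall>i. j < i \<and> i \<le> k \<longrightarrow> \<mu> i \<noteq> \<mu> j)"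

definition GY_elements :: "('k::field \<Rightarrow> 'r::ring_1) \<Rightarrow> (nat \<Rightarrow> 'r) \<Rightarrow> nat \<Rightarrow> nat
      \<Rightarrow> ((nat \<Rightarrow> 'k) \<Rightarrow> 'r \<Rightarrow> 'r) \<Rightarrow> (nat \<Rightarrow> nat) \<Rightarrow> (nat \<Rightarrow> 'r) \<Rightarrow> bool" where
  "GY_elements sc x N n act \<mu> y \<longleftrightarrow>
     \<mu> ` {1..N} = {1..n} \<and>
     (\<forall>k\<in>{1..N}. homogeneous sc n act (y k)) \<and>
     (\<forall>k\<in>{1..N}. \<not> has_pred \<mu> k \<longrightarrow> y k = x k) \<and>
     (\<forall>k\<in>{1..N}. has_pred \<mu> k \<longrightarrow>
         (\<exists>c\<in>subalg sc x (k - 1). y k = y (pred_idx \<mu> k) * x k - c)) \<and>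
     (\<forall>k\<in>{1..N}.
         (\<forall>j\<in>{1..k}. succ_gt \<mu> j k \<longrightarrow> prime_elem_in (subalg sc x k) (y j)) \<and>
         (\<forall>u. homogeneous sc n act u \<and> u \<in> subalg sc x k \<and> prime_elem_in (subalg sc x k) u \<longrightarrow>
              (\<exists>j\<in>{1..k}. succ_gt \<mu> j k \<and> (\<exists>c. c \<noteq> 0 \<and> u = sc c * y j))))"

end

theory Submission
  imports Defs
begin


definition dlt :: "'r::ring_1 set \<Rightarrow> 'r \<Rightarrow> nat \<Rightarrow> 'r \<Rightarrow> bool" where
  "dlt S X n u \<longleftrightarrow> (\<exists>c. (\<forall>i<n. c i \<in> S) \<and> u = (\<Sum>i<n. c i * X ^ i))"

definition hdeg :: "'r::ring_1 set \<Rightarrow> 'r \<Rightarrow> nat \<Rightarrow> 'r \<Rightarrow> bool" where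
  "hdeg S X d u \<longleftrightarrow> (\<exists>w v. w \<in> S \<and> w \<noteq> 0 \<and> dlt S X d v \<and> u = w * X ^ d + v)"

locale ore =
  fixes S :: "'r::ring_1 set" and X :: 'r and \<sigma> \<delta> :: "'r \<Rightarrow> 'r"
  assumes S0: "0 \<in> S" and S1: "1 \<in> S"
    and Sadd: "a \<in> S \<Longrightarrow> b \<in> S \<Longrightarrow> a + b \<in> S"
    and Sdiff: "a \<in> S \<Longrightarrow> b \<in> S \<Longrightarrow> a - b \<in> S"
    and Smult: "a \<in> S \<Longrightarrow> b \<in> S \<Longrightarrow> a * b \<in> S"
    and Suminus: "a \<in> S \<Longrightarrow> - a \<in> S"
    and sigS: "s \<in> S \<Longrightarrow> \<sigma> s \<in> S"
    and sig0: "s \<in> S \<Longrightarrow> \<sigma> s = 0 \<Longrightarrow> s = 0"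
    and delS: "s \<in> S \<Longrightarrow> \<delta> s \<in> S"
    and comm: "s \<in> S \<Longrightarrow> X * s = \<sigma> s * X + \<delta> s"
    and free: "(\<forall>i<m. f i \<in> S) \<Longrightarrow> (\<Sum>i<m. f i * X ^ i) = 0 \<Longrightarrow> i < m \<Longrightarrow> f i = 0"
begin

lemma dlt_0: "dlt S X n 0"
  unfolding dlt_def by (rule exI[of _ "\<lambda>_. 0"]) (simp add: S0)

lemma dlt_mono: assumes "dlt S X n u" "n \<le> m" shows "dlt S X m u"
proof -
  obtain c where c: "\<forall>i<n. c i \<in> S" "u = (\<Sum>i<n. c i * X ^ i)" using assms(1) dlt_def by blast
  define c' where "c' i = (if i < n then c i else 0)" for i
  have "(\<Sum>i<m. c' i * X ^ i) = (\<Sum>i<n. c' i * X ^ i)"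
    by (rule sum.mono_neutral_right) (use assms(2) in \<open>auto simp: c'_def\<close>)
  also have "\<dots> = u" using c by (simp add: c'_def)
  finally show ?thesis unfolding dlt_def using c S0 by (intro exI[of _ c']) (auto simp: c'_def)
qed

lemma dlt_add: "dlt S X n u \<Longrightarrow> dlt S X n v \<Longrightarrow> dlt S X n (u + v)"
  unfolding dlt_def
  apply (elim exE conjE)
  subgoal for c d by (rule exI[of _ "\<lambda>i. c i + d i"]) (simp add: Sadd sum.distrib distrib_right)
  done

lemma dlt_mono1: assumes "s \<in> S" "i < n" shows "dlt S X n (s * X ^ i)"
proof -
  have "(\<Sum>l<n. (if l = i then s else 0) * X ^ l) = (\<Sum>l<n. if l = i then s * X ^ i else 0)"
    by (rule sum.cong) auto
  also have "\<dots> = s * X ^ i" using assms(2) by simp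
  finally show ?thesis unfolding dlt_def using assms S0
    by (intro exI[of _ "\<lambda>l. if l = i then s else 0"]) auto
qed

lemma dlt_sum: "(\<forall>i<(m::nat). dlt S X n (f i)) \<Longrightarrow> dlt S X n (\<Sum>i<m. f i)"
  by (induction m) (auto simp: dlt_0 dlt_add)

lemma dlt_rep: assumes "dlt S X n u"
  obtains c where "\<forall>i<n. c i \<in> S" "u = (\<Sum>i<n. c i * X ^ i)"
  using assms dlt_def by blast

lemma dlt_Sleft: assumes "s \<in> S" "dlt S X n u" shows "dlt S X n (s * u)"
proof -
  obtain c where c: "\<forall>i<n. c i \<in> S" "u = (\<Sum>i<n. c i * X ^ i)" using assms(2) dlt_rep by blast
  have "s * u = (\<Sum>i<n. (s * c i) * X ^ i)" by (simp add: c sum_distrib_left mult.assoc)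
  also have "dlt S X n \<dots>" using c assms(1) by (intro dlt_sum allI impI dlt_mono1 Smult) auto
  finally show ?thesis .
qed

lemma dlt_X: assumes "dlt S X n u" shows "dlt S X (Suc n) (X * u)"
proof -
  obtain c where c: "\<forall>i<n. c i \<in> S" "u = (\<Sum>i<n. c i * X ^ i)" using assms dlt_rep by blast
  have "X * u = (\<Sum>i<n. X * (c i * X ^ i))" by (simp add: c sum_distrib_left)
  also have "dlt S X (Suc n) \<dots>"
  proof (intro dlt_sum allI impI)
    fix i assume i: "i < n"
    have "X * (c i * X ^ i) = \<sigma> (c i) * X ^ Suc i + \<delta> (c i) * X ^ i"
      proof -
      have "X * (c i * X ^ i) = (X * c i) * X ^ i" by (simp add: mult.assoc)
      also have "\<dots> = \<sigma> (c i) * X ^ Suc i + \<delta> (c i) * X ^ i"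
        using comm[of "c i"] c i by (simp add: distrib_right mult.assoc)
      finally show ?thesis .
    qed
    also have "dlt S X (Suc n) \<dots>" using i c by (intro dlt_add dlt_mono1 sigS delS) auto
    finally show "dlt S X (Suc n) (X * (c i * X ^ i))" .
  qed
  finally show ?thesis .
qed

lemma sigpow_S: "s \<in> S \<Longrightarrow> (\<sigma> ^^ d) s \<in> S"
  by (induction d) (auto simp: sigS)

lemma sigpow_nz: "s \<in> S \<Longrightarrow> s \<noteq> 0 \<Longrightarrow> (\<sigma> ^^ d) s \<noteq> 0"
  by (induction d) (auto, metis sig0 sigpow_S)

lemma Xpow_S: assumes "s \<in> S" shows "\<exists>v. dlt S X d v \<and> X ^ d * s = (\<sigma> ^^ d) s * X ^ d + v"
proof (induction d)
  case 0 show ?case using dlt_0 by auto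
next
  case (Suc d)
  then obtain v where v: "dlt S X d v" "X ^ d * s = (\<sigma> ^^ d) s * X ^ d + v" by blast
  define t where "t = (\<sigma> ^^ d) s"
  have t: "t \<in> S" using sigpow_S assms t_def by simp
  have "X ^ Suc d * s = X * (X ^ d * s)" by (simp add: mult.assoc)
  also have "\<dots> = (X * t) * X ^ d + X * v" using v t_def by (simp add: distrib_left mult.assoc)
  also have "\<dots> = \<sigma> t * X ^ Suc d + (\<delta> t * X ^ d + X * v)"
    using comm[OF t] by (simp add: distrib_right mult.assoc)
  finally have "X ^ Suc d * s = (\<sigma> ^^ Suc d) s * X ^ Suc d + (\<delta> t * X ^ d + X * v)"
    by (simp add: t_def)
  moreover have "dlt S X (Suc d) (\<delta> t * X ^ d + X * v)"
    using t v by (intro dlt_add dlt_mono1 delS dlt_X) auto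
  ultimately show ?case by blast
qed

lemma dlt_Xpow: "dlt S X n u \<Longrightarrow> dlt S X (d + n) (X ^ d * u)"
proof (induction d)
  case 0 thus ?case by simp
next
  case (Suc d)
  hence "dlt S X (Suc (d + n)) (X * (X ^ d * u))" by (intro dlt_X) auto
  thus ?case by (simp add: mult.assoc)
qed

lemma dlt_Sright: assumes "dlt S X n u" "s \<in> S" shows "dlt S X n (u * s)"
proof -
  obtain c where c: "\<forall>i<n. c i \<in> S" "u = (\<Sum>i<n. c i * X ^ i)" using assms(1) dlt_rep by blast
  have "u * s = (\<Sum>i<n. c i * (X ^ i * s))" by (simp add: c sum_distrib_right mult.assoc)
  also have "dlt S X n \<dots>"
  proof (intro dlt_sum allI impI)
    fix i assume i: "i < n"
    obtain v where v: "dlt S X i v" "X ^ i * s = (\<sigma> ^^ i) s * X ^ i + v" using Xpow_S assms(2) by blast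
    have "c i * (X ^ i * s) = (c i * (\<sigma> ^^ i) s) * X ^ i + c i * v"
      by (simp add: v distrib_left mult.assoc)
    also have "dlt S X n \<dots>"
    proof (rule dlt_add)
      show "dlt S X n (c i * (\<sigma> ^^ i) s * X ^ i)" using i c assms(2) by (intro dlt_mono1 Smult sigpow_S) auto
      have "dlt S X i (c i * v)" using i c v by (intro dlt_Sleft) auto
      thus "dlt S X n (c i * v)" using dlt_mono[of i "c i * v" n] i by simp
    qed
    finally show "dlt S X n (c i * (X ^ i * s))" .
  qed
  finally show ?thesis .
qed

lemma dlt_rXpow: assumes "dlt S X n u" shows "dlt S X (n + e) (u * X ^ e)"
proof -
  obtain c where c: "\<forall>i<n. c i \<in> S" "u = (\<Sum>i<n. c i * X ^ i)" using assms(1) dlt_rep by blast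
  have "u * X ^ e = (\<Sum>i<n. c i * X ^ (i + e))" by (simp add: c sum_distrib_right mult.assoc power_add)
  also have "dlt S X (n + e) \<dots>" using c by (intro dlt_sum allI impI dlt_mono1) auto
  finally show ?thesis .
qed

lemma dlt_mult: assumes "dlt S X n u" "dlt S X m v" shows "dlt S X (n + m) (u * v)"
proof -
  obtain c where c: "\<forall>i<n. c i \<in> S" "u = (\<Sum>i<n. c i * X ^ i)" using assms(1) dlt_rep by blast
  have "u * v = (\<Sum>i<n. c i * (X ^ i * v))" by (simp add: c sum_distrib_right mult.assoc)
  also have "dlt S X (n + m) \<dots>"
  proof (intro dlt_sum allI impI)
    fix i assume i: "i < n"
    have "dlt S X (i + m) (c i * (X ^ i * v))" using c i assms(2) by (intro dlt_Sleft dlt_Xpow) auto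
    thus "dlt S X (n + m) (c i * (X ^ i * v))" using dlt_mono[of "i+m" _ "n+m"] i by simp
  qed
  finally show ?thesis .
qed

lemma uniq: assumes "hdeg S X d u" shows "\<not> dlt S X d u"
proof
  assume "dlt S X d u"
  then obtain c where c: "\<forall>i<d. c i \<in> S" "u = (\<Sum>i<d. c i * X ^ i)" using dlt_rep by blast
  obtain w v where wv: "w \<in> S" "w \<noteq> 0" "dlt S X d v" "u = w * X ^ d + v" using assms hdeg_def by blast
  obtain b where b: "\<forall>i<d. b i \<in> S" "v = (\<Sum>i<d. b i * X ^ i)" using wv(3) dlt_rep by blast
  define a where "a i = (if i = d then w else b i - c i)" for i
  have "(\<Sum>i<Suc d. a i * X ^ i) = w * X ^ d + (\<Sum>i<d. (b i - c i) * X ^ i)"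
    by (simp add: a_def)
  also have "\<dots> = w * X ^ d + v - u" by (simp add: b c sum_subtractf left_diff_distrib)
  also have "\<dots> = 0" using wv by simp
  moreover have "\<forall>i<Suc d. a i \<in> S" using wv b c by (auto simp: a_def intro: Sdiff)
  ultimately have "a d = 0" using free[of "Suc d" a d] by auto
  thus False using wv by (simp add: a_def)
qed

lemma hd_nz: "hdeg S X d u \<Longrightarrow> u \<noteq> 0"
  using uniq dlt_0 by blast

lemma hd_dlt: assumes "hdeg S X d u" "d < e" shows "dlt S X e u"
proof -
  obtain w v where wv: "w \<in> S" "dlt S X d v" "u = w * X ^ d + v" using assms(1) hdeg_def by blast
  have "dlt S X e v" using dlt_mono[of d v e] wv(2) assms(2) by simp
  thus ?thesis using wv assms(2) by (simp add: dlt_add dlt_mono1)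
qed

lemma hd_unique: assumes "hdeg S X d u" "hdeg S X e u" shows "d = e"
  using assms hd_dlt uniq by (metis linorder_neqE_nat)

lemma hd_S: "s \<in> S \<Longrightarrow> s \<noteq> 0 \<Longrightarrow> hdeg S X 0 s"
  unfolding hdeg_def using dlt_0 by force

lemma hd_exists: "dlt S X m u \<Longrightarrow> u \<noteq> 0 \<Longrightarrow> \<exists>d. hdeg S X d u"
proof (induction m arbitrary: u)
  case 0 thus ?case by (auto simp: dlt_def)
next
  case (Suc m)
  obtain c where c: "\<forall>i<Suc m. c i \<in> S" "u = (\<Sum>i<Suc m. c i * X ^ i)" using Suc.prems(1) dlt_rep by blast
  have u: "u = c m * X ^ m + (\<Sum>i<m. c i * X ^ i)" using c by (simp add: add.commute)
  have d: "dlt S X m (\<Sum>i<m. c i * X ^ i)" unfolding dlt_def using c by (intro exI[of _ c]) auto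
  show ?case
  proof (cases "c m = 0")
    case True thus ?thesis using Suc.IH[OF _ Suc.prems(2)] u d by simp
  next
    case False thus ?thesis unfolding hdeg_def using u d c by blast
  qed
qed

lemma hd_mult:
  assumes dom: "\<forall>a\<in>S. \<forall>b\<in>S. a * b = 0 \<longrightarrow> a = 0 \<or> b = 0"
    and "hdeg S X d u" "hdeg S X e u'"
  shows "hdeg S X (d + e) (u * u')"
proof -
  obtain w v where wv: "w \<in> S" "w \<noteq> 0" "dlt S X d v" "u = w * X ^ d + v" using assms(2) hdeg_def by blast
  obtain w' v' where wv': "w' \<in> S" "w' \<noteq> 0" "dlt S X e v'" "u' = w' * X ^ e + v'" using assms(3) hdeg_def by blast
  obtain z where z: "dlt S X d z" "X ^ d * w' = (\<sigma> ^^ d) w' * X ^ d + z" using Xpow_S wv'(1) by blast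
  have "u * u' = w * (X ^ d * w') * X ^ e + w * (X ^ d * v') + v * w' * X ^ e + v * v'"
    by (simp add: wv wv' distrib_left distrib_right mult.assoc)
  also have "\<dots> = (w * (\<sigma> ^^ d) w') * X ^ (d + e) +
      (w * z * X ^ e + w * (X ^ d * v') + v * w' * X ^ e + v * v')"
    by (simp add: z distrib_left distrib_right mult.assoc power_add add.assoc)
  finally have eq: "u * u' = (w * (\<sigma> ^^ d) w') * X ^ (d + e) +
      (w * z * X ^ e + w * (X ^ d * v') + v * w' * X ^ e + v * v')" .
  have l: "w * (\<sigma> ^^ d) w' \<in> S" using wv wv' by (intro Smult sigpow_S)
  have nz: "w * (\<sigma> ^^ d) w' \<noteq> 0" using dom wv wv' sigpow_S sigpow_nz by blast
  have r: "dlt S X (d + e) (w * z * X ^ e + w * (X ^ d * v') + v * w' * X ^ e + v * v')"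
    using wv wv' z by (intro dlt_add dlt_rXpow dlt_Sleft dlt_Xpow dlt_Sright dlt_mult) auto
  show ?thesis unfolding hdeg_def using eq l nz r by blast
qed

lemma proj1: assumes "a \<in> S" "b \<in> S" "dlt S X m r" "a = b * r" shows "\<exists>r'\<in>S. a = b * r'"
proof -
  obtain c where c: "\<forall>i<m. c i \<in> S" "r = (\<Sum>i<m. c i * X ^ i)" using assms(3) dlt_rep by blast
  show ?thesis
  proof (cases m)
    case 0 thus ?thesis using c assms S0 by (auto intro!: bexI[of _ 0])
  next
    case (Suc m')
    define e where "e i = b * c i - (if i = 0 then a else 0)" for i
    have "(\<Sum>i<m. (if i = 0 then a else 0) * X ^ i) = (\<Sum>i<m. if i = 0 then a else 0)"
      by (rule sum.cong) auto
    also have "\<dots> = a" using Suc by simp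
    finally have A: "(\<Sum>i<m. (if i = 0 then a else 0) * X ^ i) = a" .
    have "(\<Sum>i<m. e i * X ^ i) = b * r - a"
      by (simp add: e_def c A sum_subtractf left_diff_distrib sum_distrib_left mult.assoc)
    also have "\<dots> = 0" using assms by simp
    finally have E1: "(\<Sum>i<m. e i * X ^ i) = 0" .
    have E2: "\<forall>i<m. e i \<in> S" using c assms S0 by (auto simp: e_def intro!: Sdiff Smult)
    have "e 0 = 0" using free[OF E2 E1] Suc by simp
    thus ?thesis using c Suc by (auto simp: e_def)
  qed
qed

end


lemma subalg_mono: "u \<in> subalg sc x k \<Longrightarrow> k \<le> k' \<Longrightarrow> u \<in> subalg sc x k'"
  by (induction rule: subalg.induct) (auto intro: subalg.intros)

lemma sc_add: "K_algebra sc \<Longrightarrow> sc (a + b) = sc a + sc b"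
  unfolding K_algebra_def by (elim conjE) (rule spec2)
lemma sc_mult: "K_algebra sc \<Longrightarrow> sc (a * b) = sc a * sc b"
  unfolding K_algebra_def by (elim conjE) (rule spec2)
lemma sc_1: "K_algebra sc \<Longrightarrow> sc 1 = 1"
  unfolding K_algebra_def by (elim conjE)

lemma sc_0: "K_algebra sc \<Longrightarrow> sc 0 = 0"
  using sc_add[of sc 0 0] by simp

lemma sc_neg: assumes "K_algebra sc" shows "sc (- a) = - sc a"
proof -
  have "sc (- a) + sc a = sc 0" using sc_add[OF assms, of "-a" a] by simp
  thus ?thesis using sc_0[OF assms] by (simp add: eq_neg_iff_add_eq_0)
qed

lemma sc_nz: assumes "K_algebra sc" "c \<noteq> 0" shows "sc c \<noteq> 0"
proof
  assume "sc c = 0"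
  hence "sc (c * inverse c) = 0" using sc_mult[OF assms(1)] by simp
  thus False using assms sc_1[OF assms(1)] by simp
qed

lemma subalg_0: assumes ka: "K_algebra sc" shows "u \<in> subalg sc x 0 \<Longrightarrow> \<exists>c. u = sc c"
proof (induction rule: subalg.induct)
  case (add a b)
  then obtain c d where "a = sc c" "b = sc d" by blast
  thus ?case using sc_add[OF ka] sc_mult[OF ka] by metis
next
  case (mult a b)
  then obtain c d where "a = sc c" "b = sc d" by blast
  thus ?case using sc_add[OF ka] sc_mult[OF ka] by metis
next
  case (uminus a)
  then obtain c where "a = sc c" by blast
  thus ?case using sc_neg[OF ka] by metis
qed auto

lemma dom0: assumes "K_algebra sc" "a \<in> subalg sc x 0" "b \<in> subalg sc x 0" "a * b = 0"
  shows "a = 0 \<or> b = 0"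
proof -
  obtain c where "a = sc c" using subalg_0[OF assms(1) assms(2)] by blast
  moreover obtain d where "b = sc d" using subalg_0[OF assms(1) assms(3)] by blast
  moreover have "sc (c * d) = sc c * sc d" using sc_mult[OF assms(1)] by simp
  ultimately have "a * b = sc (c * d)" by simp
  note cd = \<open>a = sc c\<close> \<open>b = sc d\<close>
  have "c * d = 0" using \<open>a * b = sc (c * d)\<close> assms(4) sc_nz[OF assms(1), of "c * d"] by auto
  hence "c = 0 \<or> d = 0" by simp
  thus ?thesis using cd sc_0[OF assms(1)] by auto
qed

lemma io_ka: "iterated_Ore sc x N \<sigma> \<delta> \<Longrightarrow> K_algebra sc"
  unfolding iterated_Ore_def by (elim conjE)

lemma io_univ: "iterated_Ore sc x N \<sigma> \<delta> \<Longrightarrow> subalg sc x N = UNIV"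
  unfolding iterated_Ore_def by (elim conjE)

lemma io_k: assumes "iterated_Ore sc x N \<sigma> \<delta>" "k \<in> {1..N}"
  shows "K_automorphism_on sc (subalg sc x (k - 1)) (\<sigma> k) \<and>
        sigma_derivation_on sc (subalg sc x (k - 1)) (\<sigma> k) (\<delta> k) \<and>
        (\<forall>r\<in>subalg sc x (k - 1). x k * r = \<sigma> k r * x k + \<delta> k r) \<and>
        (\<forall>r\<in>subalg sc x k. \<exists>m a. (\<forall>i<m. a i \<in> subalg sc x (k - 1)) \<and>
                                    r = (\<Sum>i<m. a i * x k ^ i)) \<and>
        (\<forall>m a. (\<forall>i<m. a i \<in> subalg sc x (k - 1)) \<and> (\<Sum>i<m. a i * x k ^ i) = 0
                 \<longrightarrow> (\<forall>i<m. a i = 0))"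
proof -
  have "\<forall>k\<in>{1..N}.
        K_automorphism_on sc (subalg sc x (k - 1)) (\<sigma> k) \<and>
        sigma_derivation_on sc (subalg sc x (k - 1)) (\<sigma> k) (\<delta> k) \<and>
        (\<forall>r\<in>subalg sc x (k - 1). x k * r = \<sigma> k r * x k + \<delta> k r) \<and>
        (\<forall>r\<in>subalg sc x k. \<exists>m a. (\<forall>i<m. a i \<in> subalg sc x (k - 1)) \<and>
                                    r = (\<Sum>i<m. a i * x k ^ i)) \<and>
        (\<forall>m a. (\<forall>i<m. a i \<in> subalg sc x (k - 1)) \<and> (\<Sum>i<m. a i * x k ^ i) = 0
                 \<longrightarrow> (\<forall>i<m. a i = 0))"
    using assms(1) unfolding iterated_Ore_def by (elim conjE)
  thus ?thesis using assms(2) by (rule bspec)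
qed

lemma ore_inst:
  assumes io: "iterated_Ore sc x N \<sigma> \<delta>" and k: "k \<in> {1..N}"
  shows "ore (subalg sc x (k - 1)) (x k) (\<sigma> k) (\<delta> k)"
proof -
  let ?S = "subalg sc x (k - 1)"
  have ka: "K_algebra sc" using io by (rule io_ka)
  note B = io_k[OF io k]
  note A1 = B[THEN conjunct1]
  note A2 = B[THEN conjunct2, THEN conjunct1]
  note A3 = B[THEN conjunct2, THEN conjunct2, THEN conjunct1]
  note A4 = B[THEN conjunct2, THEN conjunct2, THEN conjunct2, THEN conjunct2]
  have S0: "0 \<in> ?S" using subalg.scal[of sc 0] sc_0[OF ka] by simp
  have S1: "1 \<in> ?S" using subalg.scal[of sc 1] sc_1[OF ka] by simp
  have bij: "bij_betw (\<sigma> k) ?S ?S" using A1[unfolded K_automorphism_on_def, THEN conjunct1] .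
  have hom: "\<forall>a\<in>?S. \<forall>b\<in>?S. \<sigma> k (a + b) = \<sigma> k a + \<sigma> k b \<and> \<sigma> k (a * b) = \<sigma> k a * \<sigma> k b"
    using A1[unfolded K_automorphism_on_def, THEN conjunct2, THEN conjunct1] .
  have s00: "\<sigma> k 0 = 0"
  proof -
    have "\<sigma> k (0 + 0) = \<sigma> k 0 + \<sigma> k 0" using hom S0 by blast
    thus ?thesis by simp
  qed
  have delS: "\<forall>a\<in>?S. \<delta> k a \<in> ?S" using A2[unfolded sigma_derivation_on_def, THEN conjunct1] .
  show ?thesis
  proof (rule ore.intro)
    show "0 \<in> ?S" by fact
    show "1 \<in> ?S" by fact
    show "\<And>a b. a \<in> ?S \<Longrightarrow> b \<in> ?S \<Longrightarrow> a + b \<in> ?S" by (rule subalg.add)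
    show "\<And>a b. a \<in> ?S \<Longrightarrow> b \<in> ?S \<Longrightarrow> a - b \<in> ?S"
    proof -
      fix a b assume "a \<in> ?S" "b \<in> ?S"
      hence "a + - b \<in> ?S" by (intro subalg.add subalg.uminus)
      thus "a - b \<in> ?S" by simp
    qed
    show "\<And>a b. a \<in> ?S \<Longrightarrow> b \<in> ?S \<Longrightarrow> a * b \<in> ?S" by (rule subalg.mult)
    show "\<And>a. a \<in> ?S \<Longrightarrow> - a \<in> ?S" by (rule subalg.uminus)
    show "\<And>s. s \<in> ?S \<Longrightarrow> \<sigma> k s \<in> ?S" using bij bij_betwE by blast
    show "\<And>s. s \<in> ?S \<Longrightarrow> \<sigma> k s = 0 \<Longrightarrow> s = 0"
    proof -
      fix s assume s: "s \<in> ?S" "\<sigma> k s = 0"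
      have "inj_on (\<sigma> k) ?S" using bij by (rule bij_betw_imp_inj_on)
      thus "s = 0" using s S0 s00 by (metis inj_on_def)
    qed
    show "\<And>s. s \<in> ?S \<Longrightarrow> \<delta> k s \<in> ?S" using delS by blast
    show "\<And>s. s \<in> ?S \<Longrightarrow> x k * s = \<sigma> k s * x k + \<delta> k s" using A3 by blast
    show "\<And>m f i. \<forall>i<m. f i \<in> ?S \<Longrightarrow> (\<Sum>i<m. f i * x k ^ i) = 0 \<Longrightarrow> i < m \<Longrightarrow> f i = 0"
      using A4 by blast
  qed
qed

lemma rep_inst:
  assumes io: "iterated_Ore sc x N \<sigma> \<delta>" and k: "k \<in> {1..N}" and u: "u \<in> subalg sc x k"
  shows "\<exists>m. dlt (subalg sc x (k - 1)) (x k) m u"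
proof -
  have "\<forall>r\<in>subalg sc x k. \<exists>m a. (\<forall>i<m. a i \<in> subalg sc x (k - 1)) \<and> r = (\<Sum>i<m. a i * x k ^ i)"
    using io_k[OF io k] by (elim conjE)
  thus ?thesis using u unfolding dlt_def by blast
qed

lemma domain_k:
  assumes io: "iterated_Ore sc x N \<sigma> \<delta>"
  shows "k \<le> N \<Longrightarrow> \<forall>a\<in>subalg sc x k. \<forall>b\<in>subalg sc x k. a * b = 0 \<longrightarrow> a = 0 \<or> b = 0"
proof (induction k)
  case 0 thus ?case using dom0[OF io_ka[OF io]] by blast
next
  case (Suc k)
  have k: "Suc k \<in> {1..N}" using Suc.prems by simp
  interpret ore "subalg sc x k" "x (Suc k)" "\<sigma> (Suc k)" "\<delta> (Suc k)"
    using ore_inst[OF io k] by simp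
  have IH: "\<forall>a\<in>subalg sc x k. \<forall>b\<in>subalg sc x k. a * b = 0 \<longrightarrow> a = 0 \<or> b = 0"
    using Suc by simp
  show ?case
  proof (intro ballI impI)
    fix a b assume a: "a \<in> subalg sc x (Suc k)" and b: "b \<in> subalg sc x (Suc k)" and ab: "a * b = 0"
    show "a = 0 \<or> b = 0"
    proof (rule ccontr)
      assume "\<not> (a = 0 \<or> b = 0)"
      then have nz: "a \<noteq> 0" "b \<noteq> 0" by auto
      obtain m where "dlt (subalg sc x k) (x (Suc k)) m a" using rep_inst[OF io k a] by auto
      then obtain d where d: "hdeg (subalg sc x k) (x (Suc k)) d a" using hd_exists nz by blast
      obtain m' where "dlt (subalg sc x k) (x (Suc k)) m' b" using rep_inst[OF io k b] by auto
      then obtain e where e: "hdeg (subalg sc x k) (x (Suc k)) e b" using hd_exists nz by blast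
      have "hdeg (subalg sc x k) (x (Suc k)) (d + e) (a * b)" using hd_mult[OF IH d e] .
      thus False using hd_nz ab by blast
    qed
  qed
qed

lemma proj:
  assumes io: "iterated_Ore sc x N \<sigma> \<delta>" and k: "k \<le> N"
    and a: "a \<in> subalg sc x k" and b: "b \<in> subalg sc x k" and eq: "a = b * r"
  shows "\<exists>r'\<in>subalg sc x k. a = b * r'"
proof -
  have H: "\<forall>r. r \<in> subalg sc x (k + d) \<longrightarrow> k + d \<le> N \<longrightarrow> a = b * r \<longrightarrow> (\<exists>r'\<in>subalg sc x k. a = b * r')" for d
  proof (induction d)
    case 0 thus ?case by auto
  next
    case (Suc d)
    show ?case
    proof (intro allI impI)
      fix r assume r: "r \<in> subalg sc x (k + Suc d)" and le: "k + Suc d \<le> N" and e: "a = b * r"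
      have L: "Suc (k + d) \<in> {1..N}" using le by simp
      interpret ore "subalg sc x (k + d)" "x (Suc (k + d))" "\<sigma> (Suc (k + d))" "\<delta> (Suc (k + d))"
        using ore_inst[OF io L] by simp
      obtain m where "dlt (subalg sc x (k + d)) (x (Suc (k + d))) m r"
        using rep_inst[OF io L] r by auto
      moreover have "a \<in> subalg sc x (k + d)" "b \<in> subalg sc x (k + d)"
        using a b by (auto intro: subalg_mono)
      ultimately obtain r' where "r' \<in> subalg sc x (k + d)" "a = b * r'" using proj1 e by blast
      thus "\<exists>r'\<in>subalg sc x k. a = b * r'" using Suc.IH le by auto
    qed
  qed
  have "r \<in> subalg sc x (k + (N - k))" using io_univ[OF io] k by simp
  thus ?thesis using H[of "N - k"] k eq by simp
qed



lemma prime_y: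
  assumes gy: "GY_elements sc x N n act \<mu> y" and k: "k \<in> {1..N}"
  shows "prime_elem_in (subalg sc x k) (y k)"
proof -
  have "\<forall>j\<in>{1..k}. succ_gt \<mu> j k \<longrightarrow> prime_elem_in (subalg sc x k) (y j)"
    using gy k unfolding GY_elements_def by blast
  moreover have "succ_gt \<mu> k k" unfolding succ_gt_def by auto
  ultimately show ?thesis using k by auto
qed

lemma prime_y_facts:
  assumes gy: "GY_elements sc x N n act \<mu> y" and k: "k \<in> {1..N}"
  shows "y k \<in> subalg sc x k" "y k \<noteq> 0"
    "{y k * r | r. r \<in> subalg sc x k} = {r * y k | r. r \<in> subalg sc x k}"
    "{y k * r | r. r \<in> subalg sc x k} \<noteq> subalg sc x k"
    "\<forall>a\<in>subalg sc x k. \<forall>b\<in>subalg sc x k. a * b \<in> {y k * r | r. r \<in> subalg sc x k} \<longrightarrow>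
        a \<in> {y k * r | r. r \<in> subalg sc x k} \<or> b \<in> {y k * r | r. r \<in> subalg sc x k}"
proof -
  note P = prime_y[OF gy k, unfolded prime_elem_in_def]
  note Nm = P[THEN conjunct2, THEN conjunct1, unfolded normal_in_def]
  note Cp = P[THEN conjunct2, THEN conjunct2, unfolded completely_prime_in_def]
  show "y k \<in> subalg sc x k" using Nm by (rule conjunct1)
  show "y k \<noteq> 0" using P by (rule conjunct1)
  show "{y k * r | r. r \<in> subalg sc x k} = {r * y k | r. r \<in> subalg sc x k}" using Nm by (rule conjunct2)
  show "{y k * r | r. r \<in> subalg sc x k} \<noteq> subalg sc x k" using Cp[THEN conjunct2] by (rule conjunct1)
  show "\<forall>a\<in>subalg sc x k. \<forall>b\<in>subalg sc x k. a * b \<in> {y k * r | r. r \<in> subalg sc x k} \<longrightarrow>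
        a \<in> {y k * r | r. r \<in> subalg sc x k} \<or> b \<in> {y k * r | r. r \<in> subalg sc x k}"
    using Cp[THEN conjunct2] by (rule conjunct2)
qed

lemma hdeg_y:
  assumes q: "QNA sc x N \<sigma> \<delta> n act" and gy: "GY_elements sc x N n act \<mu> y" and k: "k \<in> {1..N}"
  shows "hdeg (subalg sc x (k - 1)) (x k) 1 (y k)"
proof -
  have io: "iterated_Ore sc x N \<sigma> \<delta>" using q unfolding QNA_def by (elim conjE)
  interpret ore "subalg sc x (k - 1)" "x k" "\<sigma> k" "\<delta> k" using ore_inst[OF io k] .
  show ?thesis
  proof (cases "has_pred \<mu> k")
    case False
    hence "y k = x k" using gy k unfolding GY_elements_def by blast
    hence "y k = 1 * x k ^ 1 + 0" by simp
    thus ?thesis unfolding hdeg_def using S1 dlt_0 by fastforce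
  next
    case True
    then obtain c where c: "c \<in> subalg sc x (k - 1)" "y k = y (pred_idx \<mu> k) * x k - c"
      using gy k unfolding GY_elements_def by blast
    let ?A = "{j. 1 \<le> j \<and> j < k \<and> \<mu> j = \<mu> k}"
    have fin: "finite ?A" by (rule finite_subset[of _ "{..<k}"]) auto
    have ne: "?A \<noteq> {}" using True has_pred_def by blast
    have "pred_idx \<mu> k \<in> ?A" unfolding pred_idx_def using Max_in[OF fin ne] .
    hence p: "pred_idx \<mu> k \<in> {1..N}" "pred_idx \<mu> k \<le> k - 1" using k by auto
    have yp: "y (pred_idx \<mu> k) \<in> subalg sc x (k - 1)" "y (pred_idx \<mu> k) \<noteq> 0"
      using prime_y_facts[OF gy p(1)] subalg_mono p(2) by blast+
    have "y k = y (pred_idx \<mu> k) * x k ^ 1 + (- c * x k ^ 0)" using c by simp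
    moreover have "dlt (subalg sc x (k - 1)) (x k) 1 (- c * x k ^ 0)"
      using c by (intro dlt_mono1 Suminus) auto
    ultimately show ?thesis unfolding hdeg_def using yp by blast
  qed
qed

lemma lemA:
  assumes q: "QNA sc x N \<sigma> \<delta> n act" and gy: "GY_elements sc x N n act \<mu> y"
    and a: "a \<in> {1..N}" and b: "b \<in> {1..N}" and ab: "a < b" and eq: "y a = y b * r"
  shows False
proof -
  have io: "iterated_Ore sc x N \<sigma> \<delta>" using q unfolding QNA_def by (elim conjE)
  interpret ore "subalg sc x (b - 1)" "x b" "\<sigma> b" "\<delta> b" using ore_inst[OF io b] .
  have ya: "y a \<in> subalg sc x (b - 1)" "y a \<noteq> 0"
    using prime_y_facts[OF gy a] ab subalg_mono[of "y a" sc x a "b - 1"] by auto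
  have ya': "y a \<in> subalg sc x b" using ya subalg_mono by fastforce
  obtain r' where r': "r' \<in> subalg sc x b" "y a = y b * r'"
    using proj[OF io _ ya' prime_y_facts(1)[OF gy b] eq] b by auto
  have "r' \<noteq> 0" using r' ya by auto
  moreover obtain m where "dlt (subalg sc x (b - 1)) (x b) m r'" using rep_inst[OF io b r'(1)] by auto
  ultimately obtain e where e: "hdeg (subalg sc x (b - 1)) (x b) e r'" using hd_exists by blast
  have dom: "\<forall>u\<in>subalg sc x (b - 1). \<forall>v\<in>subalg sc x (b - 1). u * v = 0 \<longrightarrow> u = 0 \<or> v = 0"
    by (rule domain_k[OF io]) (use b in auto)
  have "hdeg (subalg sc x (b - 1)) (x b) (1 + e) (y a)"
    using hd_mult[OF dom hdeg_y[OF q gy b] e] r' by simp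
  moreover have "hdeg (subalg sc x (b - 1)) (x b) 0 (y a)" using hd_S ya by blast
  ultimately show False using hd_unique by fastforce
qed

lemma lemB:
  assumes q: "QNA sc x N \<sigma> \<delta> n act" and gy: "GY_elements sc x N n act \<mu> y"
    and i: "i \<in> {1..N}" and j: "j \<in> {1..N}" and ji: "j < i" and eq: "y i = y j * r"
  shows False
proof -
  have io: "iterated_Ore sc x N \<sigma> \<delta>" using q unfolding QNA_def by (elim conjE)
  let ?Ri = "subalg sc x i"
  note Fi = prime_y_facts[OF gy i]
  note Fj = prime_y_facts[OF gy j]
  have yj: "y j \<in> ?Ri" using Fj(1) ji subalg_mono by fastforce
  obtain r' where r': "r' \<in> ?Ri" "y i = y j * r'" using proj[OF io _ Fi(1) yj eq] i by auto
  have one_i: "1 \<in> ?Ri" using subalg.scal[of sc 1 x i] sc_1[OF io_ka[OF io]] by simp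
  have "y j * r' \<in> {y i * r | r. r \<in> ?Ri}" using r' one_i by (metis (mono_tags, lifting) mem_Collect_eq mult.right_neutral)
  hence "y j \<in> {y i * r | r. r \<in> ?Ri} \<or> r' \<in> {y i * r | r. r \<in> ?Ri}" using Fi(5) yj r'(1) by blast
  thus False
  proof
    assume "y j \<in> {y i * r | r. r \<in> ?Ri}"
    then obtain t where "y j = y i * t" by blast
    thus False using lemA[OF q gy j i ji] by blast
  next
    assume "r' \<in> {y i * r | r. r \<in> ?Ri}"
    then obtain t where t: "t \<in> ?Ri" "r' = y i * t" by blast
    have "y i * t \<in> {r * y i | r. r \<in> ?Ri}" using Fi(3) t by blast
    then obtain t' where t': "t' \<in> ?Ri" "y i * t = t' * y i" by blast
    have "y i = y j * r'" by (rule r'(2))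
    also have "\<dots> = y j * (y i * t)" using t(2) by simp
    also have "\<dots> = y j * (t' * y i)" using t'(2) by simp
    also have "\<dots> = (y j * t') * y i" by (simp add: mult.assoc)
    finally have yy: "y i = y j * t' * y i" .
    have "(1 - y j * t') * y i = y i - y j * t' * y i" by (simp add: left_diff_distrib)
    hence e0: "(1 - y j * t') * y i = 0" using yy by (metis diff_self)
    have D: "\<forall>u\<in>subalg sc x N. \<forall>v\<in>subalg sc x N. u * v = 0 \<longrightarrow> u = 0 \<or> v = 0"
      by (rule domain_k[OF io]) simp
    have U: "subalg sc x N = UNIV" using io_univ[OF io] .
    have "1 - y j * t' = 0 \<or> y i = 0" using D[unfolded U] e0 by blast
    hence "1 = y j * t'" using Fi(2) by simp
    moreover have one: "1 \<in> subalg sc x j" using subalg.scal[of sc 1 x j] sc_1[OF io_ka[OF io]] by simp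
    ultimately obtain t'' where t'': "t'' \<in> subalg sc x j" "1 = y j * t''"
      using proj[OF io _ one Fj(1)] j by auto
    have "subalg sc x j \<subseteq> {y j * r | r. r \<in> subalg sc x j}"
    proof
      fix s assume s: "s \<in> subalg sc x j"
      have "s = y j * (t'' * s)" using t'' by (metis mult.assoc mult_1)
      thus "s \<in> {y j * r | r. r \<in> subalg sc x j}" using s t'' subalg.mult by blast
    qed
    moreover have "{y j * r | r. r \<in> subalg sc x j} \<subseteq> subalg sc x j"
      using Fj(1) subalg.mult by blast
    ultimately show False using Fj(4) by blast
  qed
qed

theorem lemma3p4:
  fixes sc :: "'k::field_char_0 \<Rightarrow> 'r::ring_1"
    and x :: "nat \<Rightarrow> 'r" and N n :: nat
    and \<sigma> \<delta> :: "nat \<Rightarrow> 'r \<Rightarrow> 'r"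
    and act :: "(nat \<Rightarrow> 'k) \<Rightarrow> 'r \<Rightarrow> 'r"
    and \<mu> :: "nat \<Rightarrow> nat" and y :: "nat \<Rightarrow> 'r"
  assumes "QNA sc x N \<sigma> \<delta> n act"
    and "GY_elements sc x N n act \<mu> y"
    and "i \<in> {1..N}" and "j \<in> {1..N}" and "i \<noteq> j"
  shows "y i \<notin> {y j * r | r. True}"
proof
  assume "y i \<in> {y j * r | r. True}"
  then obtain r where r: "y i = y j * r" by blast
  show False
  proof (cases "i < j")
    case True show False by (rule lemA[OF assms(1,2,3,4) True r])
  next
    case False hence "j < i" using assms(5) by simp
    thus False using lemB[OF assms(1,2,3,4) _ r] by blast
  qed
qed


end
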